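(* Let $0<\gamma\le 1/2$, let $(x,z)$ be an optimal extreme point solution of LP-CVRP-MD, run the sampling procedure described in the context, and let $U$ be the set of clients that do not lie on any sampled branching. Then $\mathbb E[\ell(U)] \le e^{-\gamma}\cdot \mathrm{lb}$, where $\ell_v = \frac{2}{k}c(v,R)$, $\ell(S)=\sum_{v\in S}\ell_v$, and $\mathrm{lb}=\ell(C)$.
   Context: Problem: nonempty disjoint finite sets $C$ (clients) and $R$ (depots), $V = C\cup R$, a metric $c$ on $V$, integer capacity $k \ge 3$; $c(v,R):=\min_{r\in R}c(v,r)>0$ for every client $v$. Work in the complete bidirected graph on $V$ (directed edges $(a,b)$ of cost $c(a,b)$); for a vector $y$ on directed edges and $S\subseteq V$, $y(\delta^{in}(S))$, $y(\delta^{out}(S))$ are sums over edges entering/leaving $S$. LP-CVRP-MD has variables $x^r_{v,e}\ge 0$ ($r\in R$, $v\in C$, $e$ a directed edge) and $z^r_{v,u}\ge0$ ($r\in R$, $v\in C$, $u\in V$), objective: minimize $\sum_{r,v,e} c(e)x^r_{v,e}$, constraints: (1) $x^r_v(\delta^{out}(u))$ is $2z^r_{v,v}$ if $u=r$, $0$ if $u=v$, $z^r_{v,u}$ otherwise; (2) $x^r_v(\delta^{in}(u))$ is $0$ if $u=r$, $2z^r_{v,v}$ if $u=v$, $z^r_{v,u}$ otherwise (for all $r\in R,v\in C,u\in V$); (3) $x^r_v(\delta^{in}(S))\ge z^r_{v,u}$ whenever $u\in S\subseteq V\setminus\{r\}$; (4) $\sum_{r\in R}\sum_{v\in C} z^r_{v,u}=1$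 for all $u\in C$; (5) $z^r_{v,u}\le z^r_{v,v}$ for $u,v\in C$; (6) $z^r_{v,u}=0$ if $u,v\in C$ and $c(u,r)>c(v,r)$; (7) $\sum_{u\in C}z^r_{v,u}\le k z^r_{v,v}$. An $r$-branching is a tree rooted at $r$ oriented away from $r$. Sampling procedure: for each $r\in R$, $v\in C$, take $r$-branchings $B_1,B_2,\dots$ (finitely many) with weights $\mu_i\ge0$, $\sum_i\mu_i = 2\gamma z^r_{v,v}$, such that every directed edge $e$ lies in branchings of total weight at most $\gamma x^r_{v,e}$, $v$ lies on every $B_i$, and every client $u\neq v$ lies in branchings of total weight at least $\gamma z^r_{v,u}$ (such a decomposition exists by a theorem of Bang-Jensen, Frank and Jackson). Independently (over all $r,v,i$) include each $B_i$ with probability $\mu_i$. *)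

theory Defs
  imports "HOL-Probability.Probability"
begin

definition dedges :: "'a set \<Rightarrow> ('a \<times> 'a) set" where
  "dedges V = {(a, b). a \<in> V \<and> b \<in> V \<and> a \<noteq> b}"

definition delta_in :: "'a set \<Rightarrow> 'a set \<Rightarrow> ('a \<times> 'a) set" where
  "delta_in V S = {(a, b) \<in> dedges V. a \<notin> S \<and> b \<in> S}"

definition delta_out :: "'a set \<Rightarrow> 'a set \<Rightarrow> ('a \<times> 'a) set" where
  "delta_out V S = {(a, b) \<in> dedges V. a \<in> S \<and> b \<notin> S}"

definition metric_on :: "'a set \<Rightarrow> ('a \<Rightarrow> 'a \<Rightarrow> real) \<Rightarrow> bool" where
  "metric_on V c \<longleftrightarrow>
     (\<forall>a\<in>V. c a a = 0) \<and>
     (\<forall>a\<in>V. \<forall>b\<in>V. c a b \<ge> 0 \<and> c a b = c b a) \<and>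
     (\<forall>a\<in>V. \<forall>b\<in>V. \<forall>d\<in>V. c a d \<le> c a b + c b d)"

definition distR :: "('a \<Rightarrow> 'a \<Rightarrow> real) \<Rightarrow> 'a set \<Rightarrow> 'a \<Rightarrow> real" where
  "distR c R v = Min ((\<lambda>r. c v r) ` R)"

(* Feasibility for LP-CVRP-MD.  x r v e = x^r_{v,e},  z r v u = z^r_{v,u}.
   Variables outside the index domain are required to be 0 (they do not exist in the LP). *)
definition lp_feasible ::
  "'a set \<Rightarrow> 'a set \<Rightarrow> ('a \<Rightarrow> 'a \<Rightarrow> real) \<Rightarrow> nat \<Rightarrow>
   ('a \<Rightarrow> 'a \<Rightarrow> ('a \<times> 'a) \<Rightarrow> real) \<Rightarrow> ('a \<Rightarrow> 'a \<Rightarrow> 'a \<Rightarrow> real) \<Rightarrow> bool" where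
  "lp_feasible C R c k x z \<longleftrightarrow>
    (let V = C \<union> R in
     (\<forall>r v e. \<not> (r \<in> R \<and> v \<in> C \<and> e \<in> dedges V) \<longrightarrow> x r v e = 0) \<and>
     (\<forall>r v u. \<not> (r \<in> R \<and> v \<in> C \<and> u \<in> V) \<longrightarrow> z r v u = 0) \<and>
     (\<forall>r\<in>R. \<forall>v\<in>C. \<forall>e\<in>dedges V. x r v e \<ge> 0) \<and>
     (\<forall>r\<in>R. \<forall>v\<in>C. \<forall>u\<in>V. z r v u \<ge> 0) \<and>
     \<comment> \<open>(1)\<close>
     (\<forall>r\<in>R. \<forall>v\<in>C. \<forall>u\<in>V.
        (\<Sum>e\<in>delta_out V {u}. x r v e) =
          (if u = r then 2 * z r v v else if u = v then 0 else z r v u)) \<and>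
     \<comment> \<open>(2)\<close>
     (\<forall>r\<in>R. \<forall>v\<in>C. \<forall>u\<in>V.
        (\<Sum>e\<in>delta_in V {u}. x r v e) =
          (if u = r then 0 else if u = v then 2 * z r v v else z r v u)) \<and>
     \<comment> \<open>(3)\<close>
     (\<forall>r\<in>R. \<forall>v\<in>C. \<forall>S u. S \<subseteq> V - {r} \<and> u \<in> S \<longrightarrow>
        (\<Sum>e\<in>delta_in V S. x r v e) \<ge> z r v u) \<and>
     \<comment> \<open>(4)\<close>
     (\<forall>u\<in>C. (\<Sum>r\<in>R. \<Sum>v\<in>C. z r v u) = 1) \<and>
     \<comment> \<open>(5)\<close>
     (\<forall>r\<in>R. \<forall>v\<in>C. \<forall>u\<in>C. z r v u \<le> z r v v) \<and>
     \<comment> \<open>(6)\<close>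
     (\<forall>r\<in>R. \<forall>v\<in>C. \<forall>u\<in>C. c u r > c v r \<longrightarrow> z r v u = 0) \<and>
     \<comment> \<open>(7)\<close>
     (\<forall>r\<in>R. \<forall>v\<in>C. (\<Sum>u\<in>C. z r v u) \<le> real k * z r v v))"

definition lp_obj ::
  "'a set \<Rightarrow> 'a set \<Rightarrow> ('a \<Rightarrow> 'a \<Rightarrow> real) \<Rightarrow> ('a \<Rightarrow> 'a \<Rightarrow> ('a \<times> 'a) \<Rightarrow> real) \<Rightarrow> real" where
  "lp_obj C R c x = (\<Sum>r\<in>R. \<Sum>v\<in>C. \<Sum>e\<in>dedges (C \<union> R). c (fst e) (snd e) * x r v e)"

definition lp_optimal where
  "lp_optimal C R c k x z \<longleftrightarrow> lp_feasible C R c k x z \<and>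
     (\<forall>x' z'. lp_feasible C R c k x' z' \<longrightarrow> lp_obj C R c x \<le> lp_obj C R c x')"

definition lp_extreme where
  "lp_extreme C R c k x z \<longleftrightarrow> lp_feasible C R c k x z \<and>
     (\<forall>x1 z1 x2 z2 (t::real). lp_feasible C R c k x1 z1 \<and> lp_feasible C R c k x2 z2 \<and>
        0 < t \<and> t < 1 \<and>
        x = (\<lambda>r v e. t * x1 r v e + (1 - t) * x2 r v e) \<and>
        z = (\<lambda>r v u. t * z1 r v u + (1 - t) * z2 r v u)
        \<longrightarrow> x1 = x2 \<and> z1 = z2)"

definition bverts :: "'a \<Rightarrow> ('a \<times> 'a) set \<Rightarrow> 'a set" where
  "bverts r B = insert r (fst ` B \<union> snd ` B)"

(* r-branching: tree rooted at r, oriented away from r (arborescence) in the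
   complete bidirected graph on V *)
definition branching :: "'a set \<Rightarrow> 'a \<Rightarrow> ('a \<times> 'a) set \<Rightarrow> bool" where
  "branching V r B \<longleftrightarrow> r \<in> V \<and> B \<subseteq> dedges V \<and>
     (\<forall>(a, b) \<in> B. b \<noteq> r) \<and>
     (\<forall>a a' b. (a, b) \<in> B \<and> (a', b) \<in> B \<longrightarrow> a = a') \<and>
     (\<forall>w\<in>bverts r B. (r, w) \<in> B\<^sup>*)"

definition valid_decomp ::
  "'a set \<Rightarrow> 'a set \<Rightarrow> real \<Rightarrow> ('a \<Rightarrow> 'a \<Rightarrow> ('a \<times> 'a) \<Rightarrow> real) \<Rightarrow> ('a \<Rightarrow> 'a \<Rightarrow> 'a \<Rightarrow> real) \<Rightarrow>
   'a \<Rightarrow> 'a \<Rightarrow> (('a \<times> 'a) set \<times> real) list \<Rightarrow> bool" where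
  "valid_decomp C R \<gamma> x z r v L \<longleftrightarrow>
    (let V = C \<union> R in
     (\<forall>(B, \<mu>) \<in> set L. branching V r B \<and> \<mu> \<ge> 0 \<and> v \<in> bverts r B) \<and>
     (\<Sum>(B, \<mu>) \<leftarrow> L. \<mu>) = 2 * \<gamma> * z r v v \<and>
     (\<forall>e\<in>dedges V. (\<Sum>(B, \<mu>) \<leftarrow> filter (\<lambda>(B, \<mu>). e \<in> B) L. \<mu>) \<le> \<gamma> * x r v e) \<and>
     (\<forall>u\<in>C - {v}. (\<Sum>(B, \<mu>) \<leftarrow> filter (\<lambda>(B, \<mu>). u \<in> bverts r B) L. \<mu>) \<ge> \<gamma> * z r v u))"

definition sample_index :: "'a set \<Rightarrow> 'a set \<Rightarrow> ('a \<Rightarrow> 'a \<Rightarrow> (('a \<times> 'a) set \<times> real) list)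
    \<Rightarrow> ('a \<times> 'a \<times> nat) set" where
  "sample_index C R fam = (SIGMA r:R. SIGMA v:C. {..<length (fam r v)})"

definition sample_pmf :: "'a set \<Rightarrow> 'a set \<Rightarrow> ('a \<Rightarrow> 'a \<Rightarrow> (('a \<times> 'a) set \<times> real) list)
    \<Rightarrow> ('a \<times> 'a \<times> nat \<Rightarrow> bool) pmf" where
  "sample_pmf C R fam = Pi_pmf (sample_index C R fam) False
     (\<lambda>(r, v, i). bernoulli_pmf (snd (fam r v ! i)))"

definition uncovered :: "'a set \<Rightarrow> 'a set \<Rightarrow> ('a \<Rightarrow> 'a \<Rightarrow> (('a \<times> 'a) set \<times> real) list)
    \<Rightarrow> ('a \<times> 'a \<times> nat \<Rightarrow> bool) \<Rightarrow> 'a set" where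
  "uncovered C R fam \<omega> = {u \<in> C. \<not> (\<exists>(r, v, i) \<in> sample_index C R fam.
      \<omega> (r, v, i) \<and> u \<in> bverts r (fst (fam r v ! i)))}"

definition ell :: "'a set \<Rightarrow> ('a \<Rightarrow> 'a \<Rightarrow> real) \<Rightarrow> nat \<Rightarrow> 'a set \<Rightarrow> real" where
  "ell R c k S = (\<Sum>v\<in>S. 2 / real k * distR c R v)"

end

theory Submission imports Defs begin
lemma bern_clamp: "bernoulli_pmf p = bernoulli_pmf (min 1 (max 0 p))"
  by (rule pmf_eqI) (simp add: bernoulli_pmf.rep_eq)

lemma bern_exp:
  assumes "0 \<le> (p::real)"
  shows "measure_pmf.expectation (bernoulli_pmf p) (\<lambda>b. if b then 0 else 1) \<le> exp (- p)"
proof (cases "p \<le> 1")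
  case True
  then show ?thesis using assms exp_ge_add_one_self[of "-p"] by simp
next
  case False
  then have "bernoulli_pmf p = bernoulli_pmf 1" by (subst bern_clamp) simp
  then show ?thesis by simp
qed

lemma list_filter_sum:
  "(\<Sum>(B, \<mu>) \<leftarrow> filter P L. \<mu>) = (\<Sum>i<length L. if P (L ! i) then snd (L ! i) else (0::real))"
proof (induction L rule: rev_induct)
  case (snoc a L) then show ?case
    by (auto simp: nth_append split: prod.splits intro!: sum.cong)
qed simp

lemma integrable_bounded_pmf:
  fixes f :: "_ \<Rightarrow> real"
  assumes "\<And>x. \<bar>f x\<bar> \<le> B"
  shows "integrable (measure_pmf M) f"
  by (rule measure_pmf.integrable_const_bound[where B=B]) (auto simp: assms)

theorem lemma4:
  fixes C R :: "'a set" and c :: "'a \<Rightarrow> 'a \<Rightarrow> real" and k :: nat and \<gamma> :: real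
    and x :: "'a \<Rightarrow> 'a \<Rightarrow> ('a \<times> 'a) \<Rightarrow> real" and z :: "'a \<Rightarrow> 'a \<Rightarrow> 'a \<Rightarrow> real"
    and fam :: "'a \<Rightarrow> 'a \<Rightarrow> (('a \<times> 'a) set \<times> real) list"
  assumes "finite C" "finite R" "C \<noteq> {}" "R \<noteq> {}" "C \<inter> R = {}"
    and "metric_on (C \<union> R) c" and "k \<ge> 3"
    and "\<forall>v\<in>C. distR c R v > 0"
    and "0 < \<gamma>" "\<gamma> \<le> 1/2"
    and "lp_optimal C R c k x z" and "lp_extreme C R c k x z"
    and "\<forall>r\<in>R. \<forall>v\<in>C. valid_decomp C R \<gamma> x z r v (fam r v)"
  shows "measure_pmf.expectation (sample_pmf C R fam) (\<lambda>\<omega>. ell R c k (uncovered C R fam \<omega>))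
           \<le> exp (- \<gamma>) * ell R c k C"
proof -
  define A where "A = sample_index C R fam"
  define bv where "bv = (\<lambda>(r, v, i). bverts r (fst (fam r v ! i)))"
  define mu where "mu = (\<lambda>(r, v, i). snd (fam r v ! i))"
  define l where "l = (\<lambda>u. 2 / real k * distR c R u)"
  define g where "g = (\<lambda>u j b. if b \<and> u \<in> bv j then 0 else (1::real))"
  have finA: "finite A" unfolding A_def sample_index_def using assms(1,2) by auto
  have feas: "lp_feasible C R c k x z" using assms(11) unfolding lp_optimal_def by simp
  have znn: "\<And>r v u. r \<in> R \<Longrightarrow> v \<in> C \<Longrightarrow> u \<in> C \<Longrightarrow> z r v u \<ge> 0"
    using feas unfolding lp_feasible_def Let_def by auto
  have zsum: "\<And>u. u \<in> C \<Longrightarrow> (\<Sum>r\<in>R. \<Sum>v\<in>C. z r v u) = 1"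
    using feas unfolding lp_feasible_def Let_def by auto
  have lnn: "\<And>u. u \<in> C \<Longrightarrow> l u \<ge> 0" unfolding l_def using assms(8) by auto
  have munn: "\<And>j. j \<in> A \<Longrightarrow> mu j \<ge> 0"
  proof -
    fix j assume "j \<in> A"
    then obtain r v i where j: "j = (r, v, i)" "r \<in> R" "v \<in> C" "i < length (fam r v)"
      unfolding A_def sample_index_def by auto
    obtain B m where Bm: "fam r v ! i = (B, m)" by (cases "fam r v ! i")
    have "(B, m) \<in> set (fam r v)" using j(4) Bm nth_mem by metis
    moreover have "valid_decomp C R \<gamma> x z r v (fam r v)" using assms(13) j by auto
    ultimately have "m \<ge> 0" unfolding valid_decomp_def Let_def by fastforce
    then show "mu j \<ge> 0" using Bm j(1) unfolding mu_def by simp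
  qed
  have spmf: "sample_pmf C R fam = Pi_pmf A False (\<lambda>j. bernoulli_pmf (mu j))"
    unfolding sample_pmf_def A_def mu_def
    by (rule Pi_pmf_cong) (auto split: prod.splits)
  have step1: "ell R c k (uncovered C R fam \<omega>) = (\<Sum>u\<in>C. l u * (\<Prod>j\<in>A. g u j (\<omega> j)))" for \<omega>
  proof -
    have "ell R c k (uncovered C R fam \<omega>) =
          (\<Sum>u\<in>C. if (\<forall>j\<in>A. \<not> (\<omega> j \<and> u \<in> bv j)) then l u else 0)"
      unfolding ell_def uncovered_def l_def
      by (subst sum.inter_filter[symmetric]) (auto simp: assms(1) A_def bv_def intro!: sum.cong)
    also have "\<dots> = (\<Sum>u\<in>C. l u * (\<Prod>j\<in>A. g u j (\<omega> j)))"
    proof (rule sum.cong)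
      fix u assume "u \<in> C"
      show "(if (\<forall>j\<in>A. \<not> (\<omega> j \<and> u \<in> bv j)) then l u else 0) = l u * (\<Prod>j\<in>A. g u j (\<omega> j))"
      proof (cases "\<forall>j\<in>A. \<not> (\<omega> j \<and> u \<in> bv j)")
        case True
        then have "(\<Prod>j\<in>A. g u j (\<omega> j)) = 1" unfolding g_def by (intro prod.neutral) auto
        then show ?thesis using True by simp
      next
        case False
        then have "(\<Prod>j\<in>A. g u j (\<omega> j)) = 0" unfolding g_def using finA
          by (subst prod_zero_iff) auto
        then show ?thesis using False by auto
      qed
    qed simp
    finally show ?thesis .
  qed
  have bound: "measure_pmf.expectation (sample_pmf C R fam) (\<lambda>\<omega>. \<Prod>j\<in>A. g u j (\<omega> j)) \<le> exp (- \<gamma>)"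
    if u: "u \<in> C" for u
  proof -
    define w where "w = (\<lambda>j. if u \<in> bv j then mu j else 0)"
    have "measure_pmf.expectation (sample_pmf C R fam) (\<lambda>\<omega>. \<Prod>j\<in>A. g u j (\<omega> j))
          = (\<Prod>j\<in>A. measure_pmf.expectation (bernoulli_pmf (mu j)) (g u j))"
      unfolding spmf
      by (rule expectation_prod_Pi_pmf[OF finA]) (auto simp: g_def intro!: integrable_bounded_pmf[where B=1])
    also have "\<dots> \<le> (\<Prod>j\<in>A. exp (- w j))"
    proof (rule prod_mono, safe)
      fix j assume j: "j \<in> A"
      show "0 \<le> measure_pmf.expectation (bernoulli_pmf (mu j)) (g u j)"
        by (rule Bochner_Integration.integral_nonneg) (auto simp: g_def)
      show "measure_pmf.expectation (bernoulli_pmf (mu j)) (g u j) \<le> exp (- w j)"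
      proof (cases "u \<in> bv j")
        case True
        then have "g u j = (\<lambda>b. if b then 0 else 1)" unfolding g_def by auto
        then show ?thesis using bern_exp[OF munn[OF j]] True unfolding w_def by simp
      next
        case False
        then have "g u j = (\<lambda>b. 1)" unfolding g_def by auto
        then show ?thesis using False unfolding w_def by simp
      qed
    qed
    also have "\<dots> = exp (- (\<Sum>j\<in>A. w j))"
      by (simp add: exp_sum[OF finA, symmetric] sum_negf)
    also have "\<dots> \<le> exp (- \<gamma>)"
    proof -
      have "(\<Sum>j\<in>A. w j) = (\<Sum>r\<in>R. \<Sum>v\<in>C. \<Sum>i<length (fam r v). w (r, v, i))"
        unfolding A_def sample_index_def using assms(1,2)
        by (simp add: sum.Sigma)
      also have "\<dots> \<ge> (\<Sum>r\<in>R. \<Sum>v\<in>C. \<gamma> * z r v u)"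
      proof (intro sum_mono)
        fix r v assume r: "r \<in> R" and v: "v \<in> C"
        have vd: "valid_decomp C R \<gamma> x z r v (fam r v)" using assms(13) r v by auto
        have eq: "(\<Sum>i<length (fam r v). w (r, v, i)) =
               (\<Sum>(B, \<mu>) \<leftarrow> filter (\<lambda>(B, \<mu>). u \<in> bverts r B) (fam r v). \<mu>)"
          unfolding list_filter_sum w_def bv_def mu_def
          by (auto split: prod.splits intro!: sum.cong)
        show "\<gamma> * z r v u \<le> (\<Sum>i<length (fam r v). w (r, v, i))"
        proof (cases "u = v")
          case False
          then show ?thesis using vd u unfolding eq valid_decomp_def Let_def by auto
        next
          case True
          have "filter (\<lambda>(B, \<mu>). u \<in> bverts r B) (fam r v) = fam r v"
            using vd True unfolding valid_decomp_def Let_def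
            by (intro filter_True) auto
          then have "(\<Sum>i<length (fam r v). w (r, v, i)) = 2 * \<gamma> * z r v v"
            using vd unfolding eq valid_decomp_def Let_def by simp
          moreover have "z r v v \<ge> 0" using znn r v by auto
          ultimately show ?thesis using True assms(9) by (simp add: mult_left_mono)
        qed
      qed
      finally have "(\<Sum>j\<in>A. w j) \<ge> (\<Sum>r\<in>R. \<Sum>v\<in>C. \<gamma> * z r v u)" .
      also have "(\<Sum>r\<in>R. \<Sum>v\<in>C. \<gamma> * z r v u) = \<gamma>"
        using zsum[OF u] by (simp add: sum_distrib_left[symmetric])
      finally show ?thesis by simp
    qed
    finally show ?thesis .
  qed
  have "measure_pmf.expectation (sample_pmf C R fam) (\<lambda>\<omega>. ell R c k (uncovered C R fam \<omega>))
      = measure_pmf.expectation (sample_pmf C R fam) (\<lambda>\<omega>. \<Sum>u\<in>C. l u * (\<Prod>j\<in>A. g u j (\<omega> j)))"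
    by (simp add: step1)
  also have "\<dots> = (\<Sum>u\<in>C. measure_pmf.expectation (sample_pmf C R fam) (\<lambda>\<omega>. l u * (\<Prod>j\<in>A. g u j (\<omega> j))))"
  proof (rule Bochner_Integration.integral_sum)
    fix u assume "u \<in> C"
    have "\<bar>\<Prod>j\<in>A. g u j (\<omega> j)\<bar> \<le> 1" for \<omega>
      unfolding abs_prod g_def by (intro prod_le_1) auto
    then show "integrable (measure_pmf (sample_pmf C R fam)) (\<lambda>\<omega>. l u * (\<Prod>j\<in>A. g u j (\<omega> j)))"
      by (intro integrable_mult_right integrable_bounded_pmf[where B=1])
  qed
  also have "\<dots> = (\<Sum>u\<in>C. l u * measure_pmf.expectation (sample_pmf C R fam) (\<lambda>\<omega>. \<Prod>j\<in>A. g u j (\<omega> j)))"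
    by simp
  also have "\<dots> \<le> (\<Sum>u\<in>C. l u * exp (- \<gamma>))"
    by (intro sum_mono mult_left_mono bound lnn)
  also have "\<dots> = exp (- \<gamma>) * ell R c k C"
    unfolding ell_def l_def by (simp add: sum_distrib_left mult.commute)
  finally show ?thesis .
qed
end
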